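(* Let $\kappa>0$, $\mu>0$, and set $\sigma=\sqrt{\mu/\kappa}$. Fix a real constant $K_1$ and a choice of sign (the same in each formula below). For $0<\tau<1/\mu$ define \[ \tilde q_0(x)=\sqrt2\,\sigma\,\mathrm{sech}\big(\sqrt{\mu(1-\mu\tau)}\,x\pm K_1\big), \] \[ \tilde q_1(x)=-\frac{\sqrt{2\mu}\,\sigma}{\sqrt{1-\mu\tau}}\,\mathrm{sech}\big(\sqrt{\mu(1-\mu\tau)}\,x\pm K_1\big)\tanh\big(\sqrt{\mu(1-\mu\tau)}\,x\pm K_1\big), \] which give standing solitary-wave solutions $e^{i\mu t}(\tilde q_0(x),\tilde q_1(x))$ of the NLSH system $i\partial_tq_0+\partial_xq_1=-\kappa|q_0|^2q_0$, $i\tau\partial_tq_1=\partial_xq_0-q_1$, and let \[ u^+(x)=\sqrt2\,\sigma\,\mathrm{sech}\big(\sqrt{\mu}\,x\pm K_1\big) \] (the amplitude of the bright-soliton ground state $e^{i\mu t}u^+(x)$ of the NLS equation $iu_t+u_{xx}+\kappa|u|^2u=0$). Then as $\tau\to0$, $\{\tilde q_0\}$ converges uniformly on $\mathbb{R}$ to $u^+$ at a rate linear in $\tau$, and $\{\tilde q_1\}$ converges uniformly on $\mathbb{R}$ to $(u^+)'$ at a rate linear in $\tau$.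
   Context: Standing-wave ansatz: $(q_0,q_1)(x,t)=e^{i\mu t}(\tilde q_0(x),\tilde q_1(x))$ with $\mu\in\mathbb{R}$, which reduces NLSH to $\tilde q_0'=(1-\mu\tau)\tilde q_1$, $\tilde q_1'=(\mu-\kappa\tilde q_0^2)\tilde q_0$. *)

theory Defs
  imports "HOL-Analysis.Analysis"
begin

definition sech :: "real \<Rightarrow> real" where
  "sech x = 1 / cosh x"

text \<open>Standing-wave amplitudes; s is the sign (1 or -1) in front of K1.\<close>

definition q0_tilde :: "real \<Rightarrow> real \<Rightarrow> real \<Rightarrow> real \<Rightarrow> real \<Rightarrow> real \<Rightarrow> real" where
  "q0_tilde \<kappa> \<mu> K1 s \<tau> x =
     sqrt 2 * sqrt (\<mu> / \<kappa>) * sech (sqrt (\<mu> * (1 - \<mu> * \<tau>)) * x + s * K1)"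

definition q1_tilde :: "real \<Rightarrow> real \<Rightarrow> real \<Rightarrow> real \<Rightarrow> real \<Rightarrow> real \<Rightarrow> real" where
  "q1_tilde \<kappa> \<mu> K1 s \<tau> x =
     - (sqrt (2 * \<mu>) * sqrt (\<mu> / \<kappa>) / sqrt (1 - \<mu> * \<tau>))
       * sech (sqrt (\<mu> * (1 - \<mu> * \<tau>)) * x + s * K1)
       * tanh (sqrt (\<mu> * (1 - \<mu> * \<tau>)) * x + s * K1)"

definition u_plus :: "real \<Rightarrow> real \<Rightarrow> real \<Rightarrow> real \<Rightarrow> real \<Rightarrow> real" where
  "u_plus \<kappa> \<mu> K1 s x = sqrt 2 * sqrt (\<mu> / \<kappa>) * sech (sqrt \<mu> * x + s * K1)"

end

theory Submission imports Defs begin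

lemma abs_sinh_le: "\<bar>sinh (w::real)\<bar> \<le> cosh w"
  using sinh_le_cosh_real[of w] sinh_le_cosh_real[of "-w"] by (simp add: abs_if)

lemma inv_cosh_le: "1 / cosh (w::real) \<le> 2 * exp (- \<bar>w\<bar>)"
proof -
  have "exp \<bar>w\<bar> \<le> 2 * cosh w"
    by (simp add: cosh_def abs_if)
  then have "1 / cosh w \<le> 2 / exp \<bar>w\<bar>"
    by (simp add: field_simps)
  then show ?thesis by (simp add: exp_minus field_simps)
qed

lemma mvt_bound:
  fixes f f' :: "real \<Rightarrow> real"
  assumes D: "\<And>w. (f has_real_derivative f' w) (at w)"
  and B: "\<And>w. \<bar>f' w\<bar> \<le> M * exp(-\<bar>w\<bar>)"
  and a: "0 < a" "a \<le> b" "b \<le> 2*a"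
  shows "\<bar>f (a*x+c) - f (b*x+c)\<bar> \<le> (b-a) * M * exp \<bar>c\<bar> * 2 / b"
proof (cases "a = b")
  case True then show ?thesis by simp
next
  case False
  then have ab: "a < b" using a by simp
  have M: "M \<ge> 0" using B[of 0] by (smt (verit) exp_gt_zero mult_nonneg_nonneg zero_le_mult_iff)
  have "\<And>t. ((\<lambda>t. f (t*x+c)) has_real_derivative f' (t*x+c) * x) (at t)"
    by (rule DERIV_chain2[OF D]) (auto intro!: derivative_eq_intros)
  from MVT2[OF ab, of "\<lambda>t. f (t*x+c)", OF this]
  obtain z where z: "a < z" "z < b" "f (b*x+c) - f (a*x+c) = (b-a) * (f' (z*x+c) * x)" by blast
  have "\<bar>f (a*x+c) - f (b*x+c)\<bar> = (b-a) * (\<bar>f' (z*x+c)\<bar> * \<bar>x\<bar>)"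
  proof -
    have "\<bar>f (a*x+c) - f (b*x+c)\<bar> = \<bar>f (b*x+c) - f (a*x+c)\<bar>" by linarith
    also have "\<dots> = \<bar>b-a\<bar> * (\<bar>f' (z*x+c)\<bar> * \<bar>x\<bar>)" using z(3) by (simp add: abs_mult)
    finally show ?thesis using ab by simp
  qed
  also have "\<dots> \<le> (b-a) * (M * exp(-\<bar>z*x+c\<bar>) * \<bar>x\<bar>)"
    using B ab by (intro mult_left_mono mult_right_mono) auto
  also have "M * exp(-\<bar>z*x+c\<bar>) * \<bar>x\<bar> \<le> M * exp \<bar>c\<bar> * (2 / b)"
  proof -
    have z0: "z > 0" using z a by simp
    have "exp(-\<bar>z*x+c\<bar>) \<le> exp (\<bar>c\<bar> - z*\<bar>x\<bar>)"
      using z0 by (simp add: abs_mult)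
    then have e1: "exp(-\<bar>z*x+c\<bar>) * \<bar>x\<bar> \<le> exp \<bar>c\<bar> * (exp (- (z*\<bar>x\<bar>)) * \<bar>x\<bar>)"
    proof -
      have "exp (\<bar>c\<bar> - z*\<bar>x\<bar>) = exp \<bar>c\<bar> * exp (- (z*\<bar>x\<bar>))"
        by (simp add: exp_add[symmetric])
      then have "exp(-\<bar>z*x+c\<bar>) \<le> exp \<bar>c\<bar> * exp (- (z*\<bar>x\<bar>))" using \<open>exp(-\<bar>z*x+c\<bar>) \<le> exp (\<bar>c\<bar> - z*\<bar>x\<bar>)\<close> by simp
      then show ?thesis by (simp add: mult_right_mono mult.assoc[symmetric])
    qed
    have "z*\<bar>x\<bar> \<le> exp (z*\<bar>x\<bar>)" using exp_ge_add_one_self[of "z*\<bar>x\<bar>"] by linarith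
    then have "exp (- (z*\<bar>x\<bar>)) * \<bar>x\<bar> \<le> 1 / z" using z0
      by (simp add: exp_minus field_simps)
    also have "1 / z \<le> 2 / b" using z a z0 by (simp add: field_simps)
    finally have "exp(-\<bar>z*x+c\<bar>) * \<bar>x\<bar> \<le> exp \<bar>c\<bar> * (2 / b)"
      using e1 by (smt (verit) exp_gt_zero mult_left_mono)
    then show ?thesis using M by (metis mult.assoc mult_left_mono)
  qed
  then have "(b-a) * (M * exp(-\<bar>z*x+c\<bar>) * \<bar>x\<bar>) \<le> (b-a) * (M * exp \<bar>c\<bar> * (2 / b))"
    using ab by (intro mult_left_mono) auto
  finally show ?thesis by simp
qed

lemma rate_uniform:
  fixes f :: "real \<Rightarrow> real \<Rightarrow> real"
  assumes "\<forall>\<^sub>F \<tau> in at_right 0. \<forall>x. \<bar>f \<tau> x - g x\<bar> \<le> C * \<tau>"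
  shows "uniform_limit UNIV f g (at_right 0)"
proof (rule uniform_limitI)
  fix e :: real assume e: "e > 0"
  have "\<forall>\<^sub>F \<tau> in at_right 0. \<tau> < e / (\<bar>C\<bar>+1)"
    using eventually_at_right_real[of 0 "e / (\<bar>C\<bar>+1)"] e
    by (auto elim!: eventually_mono intro: divide_pos_pos)
  moreover have "\<forall>\<^sub>F \<tau> in at_right (0::real). 0 < \<tau>" by (rule eventually_at_right_less)
  ultimately show "\<forall>\<^sub>F \<tau> in at_right 0. \<forall>x\<in>UNIV. dist (f \<tau> x) (g x) < e"
    using assms
  proof eventually_elim
    case (elim \<tau>)
    have "C * \<tau> < e"
    proof -
      have "C * \<tau> \<le> (\<bar>C\<bar>+1) * \<tau>" using elim by (intro mult_right_mono) auto
      also have "\<dots> < e" using elim by (simp add: field_simps)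
      finally show ?thesis .
    qed
    then show ?case using elim by (auto simp: dist_real_def intro: le_less_trans)
  qed
qed


lemma f1_deriv: "((\<lambda>w. 1 / cosh w) has_real_derivative (- (sinh w / (cosh w)^2))) (at (w::real))"
  by (auto intro!: derivative_eq_intros simp: power2_eq_square field_simps)

lemma f1_bound: "\<bar>- (sinh w / (cosh w)^2)\<bar> \<le> 2 * exp (- \<bar>w::real\<bar>)"
proof -
  have "\<bar>- (sinh w / (cosh w)^2)\<bar> = \<bar>sinh w\<bar> / cosh w * (1 / cosh w)"
    by (simp add: abs_divide power2_eq_square)
  also have "\<dots> \<le> 1 * (1 / cosh w)"
    using abs_sinh_le[of w] by (intro mult_right_mono) auto
  also have "\<dots> \<le> 2 * exp (- \<bar>w\<bar>)" using inv_cosh_le by simp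
  finally show ?thesis .
qed

lemma f2_deriv: "((\<lambda>w. sinh w / (cosh w)^2) has_real_derivative
   ((cosh w)^2 - 2 * (sinh w)^2) / (cosh w)^3) (at (w::real))"
  by (auto intro!: derivative_eq_intros simp: power2_eq_square power3_eq_cube field_simps)

lemma f2_bound: "\<bar>((cosh w)^2 - 2 * (sinh w)^2) / (cosh w)^3\<bar> \<le> 6 * exp (- \<bar>w::real\<bar>)"
proof -
  have s: "(sinh w)^2 \<le> (cosh w)^2" using abs_sinh_le[of w]
    by (metis abs_ge_zero power2_abs power_mono)
  have "\<bar>(cosh w)^2 - 2 * (sinh w)^2\<bar> \<le> 3 * (cosh w)^2"
    using s zero_le_power2[of "sinh w"] zero_le_power2[of "cosh w"] unfolding abs_le_iff by linarith
  then have "\<bar>((cosh w)^2 - 2 * (sinh w)^2) / (cosh w)^3\<bar> \<le> 3 * (cosh w)^2 / (cosh w)^3"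
    by (simp add: abs_divide divide_right_mono)
  also have "\<dots> = 3 * (1 / cosh w)" by (simp add: power2_eq_square power3_eq_cube)
  also have "\<dots> \<le> 6 * exp (- \<bar>w\<bar>)" using inv_cosh_le[of w] by simp
  finally show ?thesis .
qed

lemma f2_le1: "\<bar>sinh w / (cosh w)^2\<bar> \<le> (1::real)"
proof -
  have "\<bar>sinh w / (cosh w)^2\<bar> = \<bar>sinh w\<bar> / cosh w * (1 / cosh w)"
    by (simp add: abs_divide power2_eq_square)
  also have "\<dots> \<le> 1 * 1"
    using abs_sinh_le[of w] cosh_real_ge_1[of w] by (intro mult_mono) auto
  finally show ?thesis by simp
qed


lemma alg: "(cZ::real) \<noteq> 0 \<Longrightarrow> r \<noteq> 0 \<Longrightarrow>
  -(P/r) * (1/cZ) * (sZ/cZ) - (-P * w) = -P * ((sZ/cZ^2)/r - w)"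
  by (simp add: field_simps power2_eq_square)

theorem proposition2:
  fixes \<kappa> \<mu> K1 s :: real
  assumes "\<kappa> > 0" and "\<mu> > 0" and "s = 1 \<or> s = -1"
  shows "uniform_limit UNIV (\<lambda>\<tau> x. q0_tilde \<kappa> \<mu> K1 s \<tau> x) (u_plus \<kappa> \<mu> K1 s) (at_right 0)
       \<and> (\<exists>C. \<forall>\<^sub>F \<tau> in at_right 0.
              \<forall>x. \<bar>q0_tilde \<kappa> \<mu> K1 s \<tau> x - u_plus \<kappa> \<mu> K1 s x\<bar> \<le> C * \<tau>)
       \<and> uniform_limit UNIV (\<lambda>\<tau> x. q1_tilde \<kappa> \<mu> K1 s \<tau> x) (deriv (u_plus \<kappa> \<mu> K1 s)) (at_right 0)
       \<and> (\<exists>C. \<forall>\<^sub>F \<tau> in at_right 0.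
              \<forall>x. \<bar>q1_tilde \<kappa> \<mu> K1 s \<tau> x - deriv (u_plus \<kappa> \<mu> K1 s) x\<bar> \<le> C * \<tau>)"
proof -
  define c where "c = s * K1"
  define b where "b = sqrt \<mu>"
  define A where "A = sqrt 2 * sqrt (\<mu> / \<kappa>)"
  define f1 :: "real \<Rightarrow> real" where "f1 = (\<lambda>w. 1 / cosh w)"
  define f2 :: "real \<Rightarrow> real" where "f2 = (\<lambda>w. sinh w / (cosh w)^2)"
  have b0: "b > 0" using assms b_def by simp
  have A0: "A \<ge> 0" using A_def assms by simp
  have u_eq: "u_plus \<kappa> \<mu> K1 s = (\<lambda>x. A * f1 (b * x + c))"
    by (auto simp: u_plus_def A_def f1_def b_def c_def sech_def)
  have du: "deriv (u_plus \<kappa> \<mu> K1 s) x = - (A * b) * f2 (b * x + c)" for x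
  proof -
    have "((\<lambda>x. A * f1 (b * x + c)) has_real_derivative A * (- (sinh (b*x+c) / (cosh (b*x+c))^2) * b)) (at x)"
      unfolding f1_def
      by (intro DERIV_cmult DERIV_chain2[OF f1_deriv]) (auto intro!: derivative_eq_intros)
    then show ?thesis unfolding u_eq f2_def by (subst DERIV_imp_deriv) (auto simp: mult_ac)
  qed
  have Ab: "sqrt (2 * \<mu>) * sqrt (\<mu> / \<kappa>) = A * b"
    by (simp add: A_def b_def real_sqrt_mult)
  define T where "T = 3 / (4 * \<mu>)"
  have T0: "T > 0" using assms T_def by simp
  have ev: "\<forall>\<^sub>F \<tau> in at_right 0. 0 < \<tau> \<and> \<tau> < T"
    using eventually_at_right_real[OF T0] by (auto elim!: eventually_mono)
  have key: "sqrt (\<mu> * (1 - \<mu> * \<tau>)) = b * sqrt (1 - \<mu> * \<tau>)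
      \<and> 1/2 < sqrt (1 - \<mu> * \<tau>) \<and> sqrt (1 - \<mu> * \<tau>) \<le> 1
      \<and> 1 - sqrt (1 - \<mu> * \<tau>) \<le> \<mu> * \<tau>" if "0 < \<tau>" "\<tau> < T" for \<tau>
  proof -
    define r where "r = sqrt (1 - \<mu> * \<tau>)"
    have mt: "0 < \<mu> * \<tau>" "\<mu> * \<tau> < 3/4" using that assms T_def by (auto simp: field_simps)
    have r1: "r \<le> 1" using mt r_def by simp
    have "sqrt (1/4) < r" unfolding r_def using mt by (intro real_sqrt_less_mono) simp
    moreover have "sqrt (1/4) = (1/2::real)" by (simp add: real_sqrt_divide)
    ultimately have r2: "1/2 < r" by simp
    have rr: "r^2 = 1 - \<mu> * \<tau>" using mt r_def by simp
    have "r^2 \<le> r" using r1 r2 by (simp add: power2_eq_square mult_left_le)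
    then have "1 - r \<le> \<mu> * \<tau>" using rr by simp
    then show ?thesis using r1 r2 by (simp add: r_def b_def real_sqrt_mult)
  qed
  have q0b: "\<forall>\<^sub>F \<tau> in at_right 0. \<forall>x. \<bar>q0_tilde \<kappa> \<mu> K1 s \<tau> x - u_plus \<kappa> \<mu> K1 s x\<bar>
      \<le> (A * 4 * exp \<bar>c\<bar> * \<mu>) * \<tau>"
    using ev
  proof eventually_elim
    case (elim \<tau>)
    define r where "r = sqrt (1 - \<mu> * \<tau>)"
    have k: "sqrt (\<mu> * (1 - \<mu> * \<tau>)) = b * r" "1/2 < r" "r \<le> 1" "1 - r \<le> \<mu> * \<tau>"
      using key[OF elim[THEN conjunct1] elim[THEN conjunct2]] r_def by auto
    show ?case
    proof
      fix x
      have "q0_tilde \<kappa> \<mu> K1 s \<tau> x - u_plus \<kappa> \<mu> K1 s x = A * (f1 ((b*r) * x + c) - f1 (b * x + c))"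
        unfolding q0_tilde_def u_eq k(1) by (simp add: A_def f1_def sech_def c_def right_diff_distrib)
      then have "\<bar>q0_tilde \<kappa> \<mu> K1 s \<tau> x - u_plus \<kappa> \<mu> K1 s x\<bar> = A * \<bar>f1 ((b*r) * x + c) - f1 (b * x + c)\<bar>"
        using A0 by (simp add: abs_mult)
      also have "\<dots> \<le> A * ((b - b*r) * 2 * exp \<bar>c\<bar> * 2 / b)"
        using A0 b0 k
        by (intro mult_left_mono mvt_bound[of f1 "\<lambda>w. - (sinh w / (cosh w)^2)"])
          (auto simp: f1_def f1_deriv f1_bound[simplified] mult_left_le)
      also have "\<dots> = A * 4 * exp \<bar>c\<bar> * (1 - r)" using b0 by (simp add: field_simps)
      also have "\<dots> \<le> A * 4 * exp \<bar>c\<bar> * (\<mu> * \<tau>)" using k A0 by (intro mult_left_mono) auto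
      finally show "\<bar>q0_tilde \<kappa> \<mu> K1 s \<tau> x - u_plus \<kappa> \<mu> K1 s x\<bar> \<le> (A * 4 * exp \<bar>c\<bar> * \<mu>) * \<tau>"
        by (simp add: mult_ac)
    qed
  qed
  have q1b: "\<forall>\<^sub>F \<tau> in at_right 0. \<forall>x. \<bar>q1_tilde \<kappa> \<mu> K1 s \<tau> x - deriv (u_plus \<kappa> \<mu> K1 s) x\<bar>
      \<le> (A * b * (2 * \<mu> + 12 * exp \<bar>c\<bar> * \<mu>)) * \<tau>"
    using ev
  proof eventually_elim
    case (elim \<tau>)
    define r where "r = sqrt (1 - \<mu> * \<tau>)"
    have k: "sqrt (\<mu> * (1 - \<mu> * \<tau>)) = b * r" "1/2 < r" "r \<le> 1" "1 - r \<le> \<mu> * \<tau>"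
      using key[OF elim[THEN conjunct1] elim[THEN conjunct2]] r_def by auto
    show ?case
    proof
      fix x
      define z where "z = f2 ((b*r) * x + c)"
      define y where "y = f2 (b * x + c)"
      have "q1_tilde \<kappa> \<mu> K1 s \<tau> x - deriv (u_plus \<kappa> \<mu> K1 s) x = - (A * b) * (z / r - y)"
      proof -
        have "q1_tilde \<kappa> \<mu> K1 s \<tau> x - deriv (u_plus \<kappa> \<mu> K1 s) x =
          -(A*b/r) * (1/cosh ((b*r) * x + c)) * (sinh ((b*r) * x + c) / cosh ((b*r) * x + c)) - (-(A*b) * y)"
          unfolding du q1_tilde_def k(1) Ab r_def[symmetric] y_def sech_def tanh_def c_def by simp
        also have "\<dots> = - (A * b) * (z / r - y)"
          unfolding z_def f2_def using k by (intro alg) auto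
        finally show ?thesis .
      qed
      then have "\<bar>q1_tilde \<kappa> \<mu> K1 s \<tau> x - deriv (u_plus \<kappa> \<mu> K1 s) x\<bar> = (A * b) * \<bar>z / r - y\<bar>"
        using A0 b0 by (simp add: abs_mult)
      also have "\<bar>z / r - y\<bar> \<le> 2 * \<mu> * \<tau> + 12 * exp \<bar>c\<bar> * \<mu> * \<tau>"
      proof -
        have e: "z / r - y = z * ((1 - r) / r) + (z - y)" using k by (simp add: field_simps)
        have "\<bar>z / r - y\<bar> = \<bar>z * ((1 - r) / r) + (z - y)\<bar>" using e by simp
        also have "\<dots> \<le> \<bar>z * ((1 - r) / r)\<bar> + \<bar>z - y\<bar>" by (rule abs_triangle_ineq)
        also have "\<bar>z * ((1 - r) / r)\<bar> = \<bar>z\<bar> * ((1 - r) / r)" using k by (simp add: abs_mult)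
        finally have "\<bar>z / r - y\<bar> \<le> \<bar>z\<bar> * ((1 - r) / r) + \<bar>z - y\<bar>" .
        moreover have "\<bar>z\<bar> * ((1 - r) / r) \<le> 1 * (2 * \<mu> * \<tau>)"
        proof (intro mult_mono)
          show "\<bar>z\<bar> \<le> 1" unfolding z_def f2_def by (rule f2_le1)
          have "(1 - r) / r \<le> 2 * (1 - r)"
          proof -
            have h: "0 \<le> (2*r-1)*(1-r)" using k by (intro mult_nonneg_nonneg) auto
            have "1 - r \<le> 2*(1-r)*r" using h by (simp add: algebra_simps)
            then show ?thesis using k by (simp add: divide_le_eq)
          qed
          then show "(1 - r) / r \<le> 2 * \<mu> * \<tau>" using k by simp
        qed (use k in auto)
        moreover have "\<bar>z - y\<bar> \<le> (b - b*r) * 6 * exp \<bar>c\<bar> * 2 / b"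
          unfolding z_def y_def using b0 k
          by (intro mvt_bound[of f2 "\<lambda>w. ((cosh w)^2 - 2 * (sinh w)^2) / (cosh w)^3"])
            (auto simp: f2_def f2_deriv f2_bound[simplified] mult_left_le)
        moreover have "(b - b*r) * 6 * exp \<bar>c\<bar> * 2 / b = 12 * exp \<bar>c\<bar> * (1 - r)"
          using b0 by (simp add: field_simps)
        moreover have "12 * exp \<bar>c\<bar> * (1 - r) \<le> 12 * exp \<bar>c\<bar> * (\<mu> * \<tau>)"
          using k by (intro mult_left_mono) auto
        ultimately show ?thesis by (simp only: mult.assoc)
      qed
      then have "(A * b) * \<bar>z / r - y\<bar> \<le> (A * b) * (2 * \<mu> * \<tau> + 12 * exp \<bar>c\<bar> * \<mu> * \<tau>)"
        using A0 b0 by (intro mult_left_mono) auto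
      finally show "\<bar>q1_tilde \<kappa> \<mu> K1 s \<tau> x - deriv (u_plus \<kappa> \<mu> K1 s) x\<bar>
          \<le> (A * b * (2 * \<mu> + 12 * exp \<bar>c\<bar> * \<mu>)) * \<tau>"
        by (simp add: algebra_simps)
    qed
  qed
  show ?thesis
    using q0b q1b rate_uniform[OF q0b] rate_uniform[OF q1b] by blast
qed

end
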